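(* Let $\Delta>\delta\geq 0$ be integers and let $\delta^*$ be a maximizer of $\frac{\Delta(\Delta-i)i}{\Delta+i}$ over $i\in\{\delta,\delta+1,\ldots,\Delta\}$. Let $G$ be a graph with $n$ vertices, maximum degree at most $\Delta$, and minimum degree at least $\delta$. Then $$irr(G)\leq \frac{\Delta(\Delta-\delta^* )\delta^*}{\Delta+\delta^*}\,n.$$
   Context: All graphs are finite, simple and undirected. For a graph $G$ with edge set $E(G)$ and vertex degrees $d_G(u)$, the irregularity (in the sense of Albertson) is $irr(G)=\sum_{uv\in E(G)}|d_G(u)-d_G(v)|$. *)

theory Defs
  imports Complex_Main
begin

definition simple_graph :: "'a set \<Rightarrow> ('a \<Rightarrow> 'a \<Rightarrow> bool) \<Rightarrow> bool" where
  "simple_graph V E \<longleftrightarrow> finite V \<and> (\<forall>u v. E u v \<longrightarrow> E v u)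
     \<and> (\<forall>u. \<not> E u u) \<and> (\<forall>u v. E u v \<longrightarrow> u \<in> V \<and> v \<in> V)"

definition degree :: "'a set \<Rightarrow> ('a \<Rightarrow> 'a \<Rightarrow> bool) \<Rightarrow> 'a \<Rightarrow> nat" where
  "degree V E u = card {v \<in> V. E u v}"

definition edges :: "'a set \<Rightarrow> ('a \<Rightarrow> 'a \<Rightarrow> bool) \<Rightarrow> 'a set set" where
  "edges V E = {{u, v} | u v. u \<in> V \<and> v \<in> V \<and> E u v}"

text \<open>Albertson irregularity: sum over edges uv of |d(u) - d(v)|. For an edge e = {u,v},
  |d(u) - d(v)| = max of d on e minus min of d on e.\<close>
definition irr :: "'a set \<Rightarrow> ('a \<Rightarrow> 'a \<Rightarrow> bool) \<Rightarrow> real" where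
  "irr V E = (\<Sum>e\<in>edges V E. real (Max (degree V E ` e)) - real (Min (degree V E ` e)))"

definition irr_bound_fun :: "nat \<Rightarrow> nat \<Rightarrow> real" where
  "irr_bound_fun \<Delta> i = real \<Delta> * (real \<Delta> - real i) * real i / (real \<Delta> + real i)"

end

theory Submission
  imports Defs
begin

lemma mono_aux:
  fixes a b c :: real
  assumes "0 \<le> a" "a \<le> b" "b \<le> c" "0 < a + b"
  shows "(b-a)*b/(a+b) \<le> (c-a)*c/(a+c)"
proof -
  have F: "(c-a)*c*(a+b) - (b-a)*b*(a+c) = (c-b)*((a+b)*c + a*(b-a))"
    by (simp add: algebra_simps)
  have "0 \<le> (c-b)*((a+b)*c + a*(b-a))"
    using assms by (intro mult_nonneg_nonneg) (auto intro!: add_nonneg_nonneg mult_nonneg_nonneg)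
  hence "(b-a)*b*(a+c) \<le> (c-a)*c*(a+b)" using F by linarith
  moreover have "0 < a + c" using assms by linarith
  ultimately show ?thesis using assms by (simp add: divide_simps mult.commute)
qed

definition ch :: "nat \<Rightarrow> nat \<Rightarrow> real" where
  "ch x y = \<bar>real x - real y\<bar> * real y / (real x + real y)"

lemma ch_sum: "\<bar>real x - real y\<bar> = ch x y + ch y x"
proof (cases "x = y")
  case True thus ?thesis by (simp add: ch_def)
next
  case False
  hence p: "real x + real y > 0" by linarith
  have "ch x y + ch y x = \<bar>real x - real y\<bar> * (real y + real x) / (real x + real y)"
    unfolding ch_def by (simp add: add_divide_distrib[symmetric] abs_minus_commute algebra_simps)
  also have "\<dots> = \<bar>real x - real y\<bar>" using p by (simp add: add.commute)
  finally show ?thesis by simp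
qed

lemma ch_bound:
  assumes "\<delta> \<le> x" "x \<le> \<Delta>" "\<delta> \<le> y" "y \<le> \<Delta>" "0 < x"
    and M: "\<forall>i \<in> {\<delta>..\<Delta>}. irr_bound_fun \<Delta> i \<le> Mv"
  shows "real x * ch x y \<le> Mv"
proof (cases "y \<le> x")
  case True
  have "(real x - real y)*real x/(real y + real x) \<le> (real \<Delta> - real y)*real \<Delta>/(real y + real \<Delta>)"
    using True assms by (intro mono_aux) auto
  hence "real y * ((real x - real y)*real x/(real y + real x)) \<le> real y * ((real \<Delta> - real y)*real \<Delta>/(real y + real \<Delta>))"
    by (intro mult_left_mono) auto
  moreover have "real x * ch x y = real y * ((real x - real y)*real x/(real y + real x))"
    using True unfolding ch_def by (simp add: add.commute)
  moreover have "irr_bound_fun \<Delta> y = real y * ((real \<Delta> - real y)*real \<Delta>/(real y + real \<Delta>))"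
    unfolding irr_bound_fun_def by (simp add: add.commute mult.commute mult.left_commute)
  moreover have "irr_bound_fun \<Delta> y \<le> Mv" using M assms by auto
  ultimately show ?thesis by linarith
next
  case False
  have "(real y - real x)*real y/(real x + real y) \<le> (real \<Delta> - real x)*real \<Delta>/(real x + real \<Delta>)"
    using False assms by (intro mono_aux) auto
  hence "real x * ((real y - real x)*real y/(real x + real y)) \<le> real x * ((real \<Delta> - real x)*real \<Delta>/(real x + real \<Delta>))"
    by (intro mult_left_mono) auto
  moreover have "real x * ch x y = real x * ((real y - real x)*real y/(real x + real y))"
    using False unfolding ch_def by simp
  moreover have "irr_bound_fun \<Delta> x = real x * ((real \<Delta> - real x)*real \<Delta>/(real x + real \<Delta>))"
    unfolding irr_bound_fun_def by (simp add: add.commute mult.commute mult.left_commute)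
  moreover have "irr_bound_fun \<Delta> x \<le> Mv" using M assms by auto
  ultimately show ?thesis by linarith
qed

theorem proposition1:
  fixes V :: "'a set" and E :: "'a \<Rightarrow> 'a \<Rightarrow> bool" and \<Delta> \<delta> \<delta>s :: nat
  assumes "\<delta> < \<Delta>"
    and "\<delta>s \<in> {\<delta>..\<Delta>}"
    and "\<forall>i \<in> {\<delta>..\<Delta>}. irr_bound_fun \<Delta> i \<le> irr_bound_fun \<Delta> \<delta>s"
    and "simple_graph V E"
    and "\<forall>v \<in> V. degree V E v \<le> \<Delta>"
    and "\<forall>v \<in> V. \<delta> \<le> degree V E v"
  shows "irr V E \<le> irr_bound_fun \<Delta> \<delta>s * real (card V)"
proof -
  define d where "d = degree V E"
  define M where "M = irr_bound_fun \<Delta> \<delta>s"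
  define N where "N = (\<lambda>u. {v \<in> V. E u v})"
  define P where "P = Sigma V N"
  have fin: "finite V" and sym: "\<And>u v. E u v \<Longrightarrow> E v u" and irr: "\<And>u. \<not> E u u"
    and inV: "\<And>u v. E u v \<Longrightarrow> u \<in> V \<and> v \<in> V"
    using assms(4) unfolding simple_graph_def by auto
  have finP: "finite P" unfolding P_def N_def using fin by auto
  have M0: "0 \<le> M" unfolding M_def irr_bound_fun_def using assms(2) by auto
  have edg: "edges V E = (\<lambda>p. {fst p, snd p}) ` P"
    unfolding edges_def P_def N_def by (auto simp: image_iff) blast+
  have step1: "irr V E = (\<Sum>p\<in>P. ch (d (fst p)) (d (snd p)))"
  proof -
    have "(\<Sum>p\<in>P. ch (d (fst p)) (d (snd p))) =
      (\<Sum>e\<in>(\<lambda>p. {fst p, snd p}) ` P. \<Sum>p\<in>{p\<in>P. {fst p, snd p} = e}. ch (d (fst p)) (d (snd p)))"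
      using finP by (rule sum.image_gen)
    also have "\<dots> = (\<Sum>e\<in>edges V E. real (Max (d ` e)) - real (Min (d ` e)))"
      unfolding edg
    proof (rule sum.cong[OF refl])
      fix e assume "e \<in> (\<lambda>p. {fst p, snd p}) ` P"
      then obtain u v where uv: "(u,v) \<in> P" "e = {u,v}" by auto
      hence Euv: "E u v" unfolding P_def N_def by auto
      hence ne: "u \<noteq> v" using irr by auto
      have fib: "{p\<in>P. {fst p, snd p} = e} = {(u,v),(v,u)}"
        using uv Euv sym inV unfolding P_def N_def by (auto simp: doubleton_eq_iff)
      have "(\<Sum>p\<in>{p\<in>P. {fst p, snd p} = e}. ch (d (fst p)) (d (snd p))) = ch (d u) (d v) + ch (d v) (d u)"
        unfolding fib using ne by simp
      also have "\<dots> = \<bar>real (d u) - real (d v)\<bar>" by (simp add: ch_sum)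
      also have "\<dots> = real (Max (d ` e)) - real (Min (d ` e))"
        unfolding uv by (cases "d u \<le> d v") (auto simp: max_def min_def)
      finally show "(\<Sum>p\<in>{p\<in>P. {fst p, snd p} = e}. ch (d (fst p)) (d (snd p))) = real (Max (d ` e)) - real (Min (d ` e))" .
    qed
    finally show ?thesis unfolding irr_def d_def by simp
  qed
  also have "\<dots> = (\<Sum>u\<in>V. \<Sum>v\<in>N u. ch (d u) (d v))"
    unfolding P_def using fin by (subst sum.Sigma) (auto simp: N_def split_beta)
  also have "\<dots> \<le> (\<Sum>u\<in>V. M)"
  proof (rule sum_mono)
    fix u assume u: "u \<in> V"
    show "(\<Sum>v\<in>N u. ch (d u) (d v)) \<le> M"
    proof (cases "d u = 0")
      case True
      hence "N u = {}" using fin unfolding d_def degree_def N_def by simp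
      thus ?thesis using M0 by simp
    next
      case False
      have cd: "card (N u) = d u" unfolding N_def d_def degree_def by simp
      have "(\<Sum>v\<in>N u. ch (d u) (d v)) \<le> of_nat (card (N u)) * (M / real (d u))"
      proof (rule sum_bounded_above)
        fix v assume v: "v \<in> N u"
        hence "v \<in> V" unfolding N_def by auto
        hence "real (d u) * ch (d u) (d v) \<le> M"
          using u False assms(3,5,6) unfolding M_def d_def
          by (intro ch_bound[where \<delta>=\<delta> and \<Delta>=\<Delta>]) auto
        thus "ch (d u) (d v) \<le> M / real (d u)" using False
          by (simp add: field_simps mult.commute)
      qed
      also have "\<dots> = M" using False cd by simp
      finally show ?thesis .
    qed
  qed
  also have "\<dots> = M * real (card V)" by simp
  finally show ?thesis unfolding M_def .
qed

end
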